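(* Let $(A,\cdot,\alpha,R)$ be a Hom-associative Rota-Baxter algebra where $R$ is a Rota-Baxter operator of weight $-1$, i.e. $R(x)\cdot R(y)=R(R(x)\cdot y+x\cdot R(y)-x\cdot y)$, and assume $\alpha\circ R=R\circ\alpha$. Define $x\ast y=R(x)\cdot y-y\cdot R(x)-x\cdot y$. Then $(A,\ast,\alpha)$ is a left Hom-preLie algebra.
   Context: $\mathbb{K}$ is an algebraically closed field of characteristic $0$. A Hom-associative algebra is a triple $(A,\cdot,\alpha)$ with $\alpha(x)\cdot(y\cdot z)=(x\cdot y)\cdot\alpha(z)$ for all $x,y,z$. A Hom-associative Rota-Baxter algebra of weight $\theta\in\mathbb{K}$ is a quadruple $(A,\cdot,\alpha,R)$ with $(A,\cdot,\alpha)$ Hom-associative and $R:A\to A$ linear satisfying $R(x)\cdot R(y)=R(R(x)\cdot y+x\cdot R(y)+\theta\,x\cdot y)$ for all $x,y$. A left Hom-preLie algebra is a triple $(A,\ast,\alpha)$ with $\alpha(x)\ast(y\ast z)-(x\ast y)\ast\alpha(z)=\alpha(y)\ast(x\ast z)-(y\ast x)\ast\alpha(z)$ for all $x,y,z$. *)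

theory Defs
  imports Complex_Main
begin

definition alg_closed_field :: "'k::field itself \<Rightarrow> bool" where
  "alg_closed_field _ \<longleftrightarrow>
     (\<forall>cs::'k list. length cs \<ge> 2 \<and> last cs \<noteq> 0 \<longrightarrow>
        (\<exists>x. (\<Sum>i<length cs. cs ! i * x ^ i) = 0))"

definition bilinear_product ::
  "('k::field \<Rightarrow> 'a::ab_group_add \<Rightarrow> 'a) \<Rightarrow> ('a \<Rightarrow> 'a \<Rightarrow> 'a) \<Rightarrow> bool" where
  "bilinear_product scl m \<longleftrightarrow>
     (\<forall>x y z. m (x + y) z = m x z + m y z) \<and>
     (\<forall>x y z. m x (y + z) = m x y + m x z) \<and>
     (\<forall>c x y. m (scl c x) y = scl c (m x y)) \<and>
     (\<forall>c x y. m x (scl c y) = scl c (m x y))"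

definition linear_map ::
  "('k::field \<Rightarrow> 'a::ab_group_add \<Rightarrow> 'a) \<Rightarrow> ('a \<Rightarrow> 'a) \<Rightarrow> bool" where
  "linear_map scl f \<longleftrightarrow>
     (\<forall>x y. f (x + y) = f x + f y) \<and> (\<forall>c x. f (scl c x) = scl c (f x))"

definition hom_associative ::
  "('k::field \<Rightarrow> 'a::ab_group_add \<Rightarrow> 'a) \<Rightarrow> ('a \<Rightarrow> 'a \<Rightarrow> 'a) \<Rightarrow> ('a \<Rightarrow> 'a) \<Rightarrow> bool" where
  "hom_associative scl m \<alpha> \<longleftrightarrow>
     bilinear_product scl m \<and> linear_map scl \<alpha> \<and>
     (\<forall>x y z. m (\<alpha> x) (m y z) = m (m x y) (\<alpha> z))"

definition hom_assoc_rota_baxter ::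
  "('k::field \<Rightarrow> 'a::ab_group_add \<Rightarrow> 'a) \<Rightarrow> ('a \<Rightarrow> 'a \<Rightarrow> 'a) \<Rightarrow> ('a \<Rightarrow> 'a)
     \<Rightarrow> ('a \<Rightarrow> 'a) \<Rightarrow> 'k \<Rightarrow> bool" where
  "hom_assoc_rota_baxter scl m \<alpha> R \<theta> \<longleftrightarrow>
     hom_associative scl m \<alpha> \<and> linear_map scl R \<and>
     (\<forall>x y. m (R x) (R y) = R (m (R x) y + m x (R y) + scl \<theta> (m x y)))"

definition left_hom_prelie ::
  "('k::field \<Rightarrow> 'a::ab_group_add \<Rightarrow> 'a) \<Rightarrow> ('a \<Rightarrow> 'a \<Rightarrow> 'a) \<Rightarrow> ('a \<Rightarrow> 'a) \<Rightarrow> bool" where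
  "left_hom_prelie scl s \<alpha> \<longleftrightarrow>
     bilinear_product scl s \<and> linear_map scl \<alpha> \<and>
     (\<forall>x y z. s (\<alpha> x) (s y z) - s (s x y) (\<alpha> z)
              = s (\<alpha> y) (s x z) - s (s y x) (\<alpha> z))"

end

theory Submission
  imports Defs
begin

theorem proposition4p2:
  fixes scl :: "'k::field_char_0 \<Rightarrow> 'a::ab_group_add \<Rightarrow> 'a"
    and m :: "'a \<Rightarrow> 'a \<Rightarrow> 'a" and \<alpha> R :: "'a \<Rightarrow> 'a"
  assumes "alg_closed_field TYPE('k)"
    and "Modules.module scl"
    and "hom_assoc_rota_baxter scl m \<alpha> R (-1)"
    and "\<alpha> \<circ> R = R \<circ> \<alpha>"
  shows "left_hom_prelie scl (\<lambda>x y. m (R x) y - m y (R x) - m x y) \<alpha>"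
proof -
  have mod: "\<And>v. scl (-1) v = - v"
    using module.scale_minus_left[OF assms(2)] module.scale_one[OF assms(2)] by metis
  have bl: "bilinear_product scl m" and la: "linear_map scl \<alpha>" and lR: "linear_map scl R"
    and ha: "\<And>x y z. m (\<alpha> x) (m y z) = m (m x y) (\<alpha> z)"
    and rb: "\<And>x y. m (R x) (R y) = R (m (R x) y + m x (R y) - m x y)"
  proof -
    have A: "hom_associative scl m \<alpha>" "linear_map scl R"
      "\<And>x y. m (R x) (R y) = R (m (R x) y + m x (R y) + scl (-1) (m x y))"
      using assms(3) unfolding hom_assoc_rota_baxter_def by auto
    show "bilinear_product scl m" "linear_map scl \<alpha>" "\<And>x y z. m (\<alpha> x) (m y z) = m (m x y) (\<alpha> z)"
      using A(1) unfolding hom_associative_def by auto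
    show "linear_map scl R" by (rule A(2))
    show "\<And>x y. m (R x) (R y) = R (m (R x) y + m x (R y) - m x y)"
      using A(3) by (simp only: mod diff_conv_add_uminus)
  qed
  have ml1: "\<And>x y z. m (x + y) z = m x z + m y z" and ml2: "\<And>x y z. m x (y + z) = m x y + m x z"
    and ms1: "\<And>c x y. m (scl c x) y = scl c (m x y)" and ms2: "\<And>c x y. m x (scl c y) = scl c (m x y)"
    using bl unfolding bilinear_product_def by auto
  have mn1: "\<And>x z. m (- x) z = - m x z"
    by (metis add.right_inverse add_left_cancel ml1 add.right_neutral)
  have mn2: "\<And>x z. m z (- x) = - m z x"
    by (metis add.right_inverse add_left_cancel ml2 add.right_neutral)
  have md1: "\<And>x y z. m (x - y) z = m x z - m y z" by (simp only: ml1 mn1 diff_conv_add_uminus)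
  have md2: "\<And>x y z. m z (x - y) = m z x - m z y" by (simp only: ml2 mn2 diff_conv_add_uminus)
  have Ra: "\<And>x y. R (x + y) = R x + R y" and Rs: "\<And>c x. R (scl c x) = scl c (R x)"
    using lR unfolding linear_map_def by auto
  have Rn: "\<And>x. R (- x) = - R x" by (metis Ra add.right_inverse add_left_cancel add.right_neutral)
  have Rd: "\<And>x y. R (x - y) = R x - R y" by (simp only: Ra Rn diff_conv_add_uminus)
  have aR: "\<And>x. R (\<alpha> x) = \<alpha> (R x)" using assms(4) by (metis comp_apply)
  define s where "s = (\<lambda>x y. m (R x) y - m y (R x) - m x y)"
  have sa: "\<And>a b. s a b = m (R a) b - m b (R a) - m a b" unfolding s_def by simp
  have W: "\<And>x y. R (s x y - s y x) = m (R x) (R y) - m (R y) (R x)"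
  proof -
    fix x y
    have "R (s x y - s y x) = R (m (R x) y + m x (R y) - m x y) - R (m (R y) x + m y (R x) - m y x)"
      unfolding s_def by (simp add: Rd Ra Rn algebra_simps)
    thus "R (s x y - s y x) = m (R x) (R y) - m (R y) (R x)" using rb by simp
  qed
  have key: "\<And>x y z. s (\<alpha> x) (s y z) - s (s x y) (\<alpha> z) = s (\<alpha> y) (s x z) - s (s y x) (\<alpha> z)"
  proof -
    fix x y z
    have h1: "s (s x y) (\<alpha> z) - s (s y x) (\<alpha> z) =
       m (m (R x) (R y) - m (R y) (R x)) (\<alpha> z) - m (\<alpha> z) (m (R x) (R y) - m (R y) (R x))
        - m (s x y - s y x) (\<alpha> z)"
    proof -
      have "s (s x y) (\<alpha> z) - s (s y x) (\<alpha> z) = s (s x y - s y x) (\<alpha> z)"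
      proof -
        have "s (s x y - s y x) (\<alpha> z) = (m (R (s x y)) (\<alpha> z) - m (R (s y x)) (\<alpha> z))
          - (m (\<alpha> z) (R (s x y)) - m (\<alpha> z) (R (s y x))) - (m (s x y) (\<alpha> z) - m (s y x) (\<alpha> z))"
          unfolding sa[of "s x y - s y x"] by (simp only: Rd md1 md2)
        thus ?thesis unfolding sa[of "s x y"] sa[of "s y x"] by (simp add: algebra_simps)
      qed
      thus ?thesis unfolding sa[of "s x y - s y x"] W by simp
    qed
    have h2: "s (\<alpha> x) (s y z) - s (\<alpha> y) (s x z) = s (s x y) (\<alpha> z) - s (s y x) (\<alpha> z)"
      unfolding h1 unfolding sa
      apply (simp only: md1 md2 aR)
      apply (simp only: ha)
      apply (simp add: algebra_simps)
      done
    show "s (\<alpha> x) (s y z) - s (s x y) (\<alpha> z) = s (\<alpha> y) (s x z) - s (s y x) (\<alpha> z)"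
      using h2 by (simp add: algebra_simps)
  qed
  have bls: "bilinear_product scl s"
    unfolding bilinear_product_def s_def
    by (simp add: ml1 ml2 ms1 ms2 Ra Rs md1 md2 algebra_simps module.scale_right_diff_distrib[OF assms(2)] module.scale_right_distrib[OF assms(2)])
  show ?thesis using bls la key unfolding left_hom_prelie_def s_def by blast
qed

end
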